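(* Let $n\ge4$ and let $D_{\mathbf a}=\sum_{i=1}^{n+1}a_iD_i$ be a framing of $\mathbb P^n$ (fan matrix $V=(\mathbf e_1\cdots\mathbf e_n\ -\mathbf 1)$) with $a_1\le\dots\le a_{n+1}$, $\gcd(a_1,\dots,a_{n+1})=1$, satisfying (a) $\operatorname{conv}(\nabla'\cap N)=\operatorname{conv}\big(\{\mathbf 0\}\cup\{[a_n/a_{n-i+1}]\mathbf e_i:1\le i\le n\}\big)$ where $\nabla'=\operatorname{conv}(\mathbf 0,\mathbf e_1,\tfrac{a_n}{a_{n-1}}\mathbf e_2,\dots,\tfrac{a_n}{a_1}\mathbf e_n)$, and (b) $d_i=d_j=1$ for some $i\ne j$, where $d_k=\gcd\{a_l:l\ne k\}$. Let $(\mathbb X_{\mathbf a},\mathbf b)$ be the $f$-dual, with fan matrix $\Lambda_{\mathbf a}$, $\Delta_{\mathbf b}=\{\mathbf n:\Lambda_{\mathbf a}^T\mathbf n\ge-\mathbf b\}$, $\Delta_{-K}=\{\mathbf n:\Lambda_{\mathbf a}^T\mathbf n\ge-\mathbf 1\}$ and $m_{Y^\vee}:=l(\Delta_{\mathbf b})-1-n-\sum_{\Theta\text{ facet of }\Delta_{-K}}l^*(\Theta)$. Then the following are equivalent: (1) $m_{Y^\vee}=1$; (2) $l(\Delta_{\mathbf b})=l(\nabla)=n+2$, where $\nabla=\operatorname{conv}(V)$; (3) $[\Delta_{\mathbf b}]=\nabla$; (4) $[a_n/a_1]=1$.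
   Context: $[x]$ for a real number is its integer part; for a polytope $P$, $[P]$ is the convex hull of its lattice points, $l(P)$ the number of its lattice points, $l^*(P)$ the number of lattice points in its relative interior. $D_1,\dots,D_{n+1}$ are the torus-invariant prime divisors of $\mathbb P^n$. The $f$-dual: $\Delta_{\mathbf a}=\{\mathbf m:V^T\mathbf m\ge-\mathbf a\}$ (a lattice polytope here), $\mathbb X_{\mathbf a}$ is the toric variety of the fan of cones over the faces of $\Delta_{\mathbf a}$, whose fan matrix $\Lambda_{\mathbf a}=(\boldsymbol\lambda_j)$ consists of the primitive generators of rays through the vertices of $\Delta_{\mathbf a}$, and $b_j=\max(\{1\}\cup\{-\langle\mathbf v_i,\boldsymbol\lambda_j\rangle\}_i)$, $\mathbf v_i$ the columns of $V$. *)

theory Defs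
  imports "HOL-Analysis.Analysis"
begin

definition latt :: "(real^'n::finite) set" where
  "latt = {x. \<forall>i. x $ i \<in> \<int>}"

text \<open>l(P): number of lattice points; l^*(P): lattice points in the relative interior;
  [P]: convex hull of the lattice points.\<close>
definition lpts :: "(real^'n::finite) set \<Rightarrow> nat" where
  "lpts P = card (P \<inter> latt)"

definition ilpts :: "(real^'n::finite) set \<Rightarrow> nat" where
  "ilpts P = card (rel_interior P \<inter> latt)"

definition lhull :: "(real^'n::finite) set \<Rightarrow> (real^'n) set" where
  "lhull P = convex hull (P \<inter> latt)"

text \<open>Standard basis vector e_i (i in 1..n), coordinates identified with 'n via ix.\<close>
definition ebas :: "(nat \<Rightarrow> 'n::finite) \<Rightarrow> nat \<Rightarrow> real^'n" where
  "ebas ix i = axis (ix i) 1"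

definition vcol :: "(nat \<Rightarrow> 'n::finite) \<Rightarrow> nat \<Rightarrow> nat \<Rightarrow> real^'n" where
  "vcol ix n i = (if i \<le> n then ebas ix i else (\<chi> j. -1))"

definition Delta_a :: "(nat \<Rightarrow> 'n::finite) \<Rightarrow> nat \<Rightarrow> (nat \<Rightarrow> int) \<Rightarrow> (real^'n) set" where
  "Delta_a ix n a = {m. \<forall>i\<in>{1..n+1}. vcol ix n i \<bullet> m \<ge> - of_int (a i)}"

definition prim :: "real^'n::finite \<Rightarrow> real^'n" where
  "prim w = (THE u. u \<in> latt \<and> (\<exists>c>0. u = c *\<^sub>R w) \<and>
                    (\<forall>c. 0 < c \<and> c < 1 \<longrightarrow> c *\<^sub>R u \<notin> latt))"

text \<open>Columns of the fan matrix Lambda_a of the f-dual X_a (as a set of vectors).\<close>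
definition Lam :: "(nat \<Rightarrow> 'n::finite) \<Rightarrow> nat \<Rightarrow> (nat \<Rightarrow> int) \<Rightarrow> (real^'n) set" where
  "Lam ix n a = prim ` {w. w extreme_point_of Delta_a ix n a}"

definition bvec :: "(nat \<Rightarrow> 'n::finite) \<Rightarrow> nat \<Rightarrow> real^'n \<Rightarrow> real" where
  "bvec ix n lam = Max (insert 1 {- (vcol ix n i \<bullet> lam) | i. i \<in> {1..n+1}})"

definition Delta_b :: "(nat \<Rightarrow> 'n::finite) \<Rightarrow> nat \<Rightarrow> (nat \<Rightarrow> int) \<Rightarrow> (real^'n) set" where
  "Delta_b ix n a = {x. \<forall>lam\<in>Lam ix n a. lam \<bullet> x \<ge> - bvec ix n lam}"

definition Delta_mK :: "(nat \<Rightarrow> 'n::finite) \<Rightarrow> nat \<Rightarrow> (nat \<Rightarrow> int) \<Rightarrow> (real^'n) set" where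
  "Delta_mK ix n a = {x. \<forall>lam\<in>Lam ix n a. lam \<bullet> x \<ge> -1}"

definition mYv :: "(nat \<Rightarrow> 'n::finite) \<Rightarrow> nat \<Rightarrow> (nat \<Rightarrow> int) \<Rightarrow> int" where
  "mYv ix n a = int (lpts (Delta_b ix n a)) - 1 - int n
      - (\<Sum>\<Theta>\<in>{F. F facet_of Delta_mK ix n a}. int (ilpts \<Theta>))"

definition nabla :: "(nat \<Rightarrow> 'n::finite) \<Rightarrow> nat \<Rightarrow> (real^'n) set" where
  "nabla ix n = convex hull (vcol ix n ` {1..n+1})"

definition nabla' :: "(nat \<Rightarrow> 'n::finite) \<Rightarrow> nat \<Rightarrow> (nat \<Rightarrow> int) \<Rightarrow> (real^'n) set" where
  "nabla' ix n a = convex hull (insert 0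
      {(of_int (a n) / of_int (a (n - i + 1))) *\<^sub>R ebas ix i | i. i \<in> {1..n}})"

definition dgcd :: "nat \<Rightarrow> (nat \<Rightarrow> int) \<Rightarrow> nat \<Rightarrow> int" where
  "dgcd n a k = Gcd (a ` ({1..n+1} - {k}))"

end

theory Submission
  imports Defs
begin



locale P5 =
  fixes ix :: "nat \<Rightarrow> 'n::finite" and n :: nat and a :: "nat \<Rightarrow> int"
  assumes n4: "n \<ge> 4"
    and ix: "bij_betw ix {1..n} (UNIV :: 'n set)"
    and apos: "\<forall>i\<in>{1..n+1}. a i > 0"
    and amono: "\<forall>i\<in>{1..n}. a i \<le> a (i + 1)"
begin

definition "kap = inv_into {1..n} ix"
definition "al k = real_of_int (a k)"
definition "S = (\<Sum>k=1..n+1. al k)"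
definition "be j = al (kap j)"

lemma ix_inj: "inj_on ix {1..n}" using ix bij_betw_def by blast
lemma kap_ix[simp]: "k \<in> {1..n} \<Longrightarrow> kap (ix k) = k"
  unfolding kap_def using ix_inj by (simp add: inv_into_f_f)
lemma ix_kap[simp]: "ix (kap j) = j"
  unfolding kap_def using ix by (metis UNIV_I bij_betw_def f_inv_into_f)
lemma kap_in: "kap j \<in> {1..n}"
  unfolding kap_def using ix by (metis UNIV_I bij_betw_def inv_into_into)
lemma kap_le: "kap j \<le> n" "1 \<le> kap j" using kap_in by auto
lemma ix_eq[simp]: "m \<in> {1..n} \<Longrightarrow> k \<in> {1..n} \<Longrightarrow> ix m = ix k \<longleftrightarrow> m = k"
  using ix_inj by (meson inj_on_eq_iff)
lemma sum_reidx: "(\<Sum>j\<in>UNIV. g j) = (\<Sum>k=1..n. g (ix k))"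
  using sum.reindex_bij_betw[OF ix, of g] by simp
lemma card_n: "CARD('n) = n"
  using bij_betw_same_card[OF ix] by simp

lemma mono_gen: "i \<in> {1..n+1} \<Longrightarrow> j \<in> {1..n+1} \<Longrightarrow> i \<le> j \<Longrightarrow> a i \<le> a j"
proof (induction j)
  case 0 then show ?case by simp
next
  case (Suc j)
  show ?case
  proof (cases "i = Suc j")
    case True then show ?thesis by simp
  next
    case False
    then have "i \<le> j" "j \<in> {1..n}" using Suc.prems by auto
    then have "a i \<le> a j" using Suc by auto
    also have "a j \<le> a (Suc j)" using amono \<open>j \<in> {1..n}\<close> by auto
    finally show ?thesis .
  qed
qed

lemma al_mono: "i \<in> {1..n+1} \<Longrightarrow> j \<in> {1..n+1} \<Longrightarrow> i \<le> j \<Longrightarrow> al i \<le> al j"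
  unfolding al_def using mono_gen by simp
lemma al_pos: "k \<in> {1..n+1} \<Longrightarrow> al k > 0" unfolding al_def using apos by simp
lemma be_pos: "be j > 0" unfolding be_def using al_pos kap_in by (metis atLeastAtMost_iff le_SucI Suc_eq_plus1)
lemma sum_be: "(\<Sum>j\<in>UNIV. be j) = S - al (n+1)"
  unfolding sum_reidx be_def S_def by simp
lemma S_gt: "k \<in> {1..n+1} \<Longrightarrow> al k < S"
proof -
  assume k: "k \<in> {1..n+1}"
  define l where "l = (if k = 1 then 2 else (1::nat))"
  have l: "l \<in> {1..n+1}" "l \<noteq> k" using n4 by (auto simp: l_def)
  have "al k + al l = sum al {k,l}" using l by simp
  also have "\<dots> \<le> S" unfolding S_def
    by (rule sum_mono2) (use k l al_pos in \<open>auto intro: less_imp_le\<close>)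
  finally show ?thesis using al_pos[OF l(1)] by simp
qed
lemma S_pos: "S > 0" using S_gt[of 1] al_pos[of 1] by simp

end



lemma ext_pm: "x extreme_point_of D \<Longrightarrow> x + d \<in> D \<Longrightarrow> x - d \<in> D \<Longrightarrow> d = 0"
proof (rule ccontr)
  assume e: "x extreme_point_of D" and p: "x + d \<in> D" and q: "x - d \<in> D" and d: "d \<noteq> 0"
  have ne: "x - d \<noteq> x + d" using d by (metis add_diff_cancel_left' diff_add_cancel diff_self eq_diff_eq' scaleR_2 scaleR_eq_0_iff zero_neq_numeral add_diff_eq)
  have "x = (1 - 1/2) *\<^sub>R (x - d) + (1/2) *\<^sub>R (x + d)"
    by (simp add: scaleR_diff_right scaleR_add_right flip: scaleR_add_left)
  then have "x \<in> open_segment (x - d) (x + d)"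
    unfolding in_segment using ne by (intro conjI exI[of _ "1/2"]) auto
  then show False using e p q unfolding extreme_point_of_def by blast
qed

lemma seg_tight:
  fixes p q b u :: real
  assumes "0 < u" "u < 1" "(1-u)*p + u*q = b" "p \<ge> b" "q \<ge> b"
  shows "p = b \<and> q = b"
proof -
  have "(1-u)*(p-b) + u*(q-b) = 0" using assms(3) by (simp add: algebra_simps)
  moreover have "(1-u)*(p-b) \<ge> 0" "u*(q-b) \<ge> 0" using assms by auto
  ultimately have "(1-u)*(p-b) = 0" "u*(q-b) = 0" by linarith+
  then show ?thesis using assms by auto
qed

context P5 begin

definition "Wj j = (\<chi> j'. (if j' = j then S else 0) - be j')"
definition "W0 = (\<chi> j'. - be j')"
definition "Wv i = (if i \<le> n then Wj (ix i) else W0)"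

lemma vcol_inner1: "k \<in> {1..n} \<Longrightarrow> vcol ix n k \<bullet> m = m $ ix k"
  by (simp add: vcol_def ebas_def inner_axis' )

lemma vcol_inner2: "vcol ix n (n+1) \<bullet> m = - (\<Sum>j\<in>UNIV. m $ j)"
  by (simp add: vcol_def inner_vec_def sum_negf)

lemma Delta_a_eq: "Delta_a ix n a = {m. (\<forall>j. m$j \<ge> - be j) \<and> (\<Sum>j\<in>UNIV. m$j) \<le> al (n+1)}"
proof -
  have "(\<forall>i\<in>{1..n+1}. vcol ix n i \<bullet> m \<ge> - of_int (a i)) \<longleftrightarrow>
        (\<forall>j. m$j \<ge> - be j) \<and> (\<Sum>j\<in>UNIV. m$j) \<le> al (n+1)" for m
  proof
    assume h: "\<forall>i\<in>{1..n+1}. vcol ix n i \<bullet> m \<ge> - of_int (a i)"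
    have "m$j \<ge> - be j" for j
      using h[rule_format, of "kap j"] kap_in[of j] vcol_inner1[of "kap j" m]
      by (auto simp: be_def al_def)
    moreover have "(\<Sum>j\<in>UNIV. m$j) \<le> al (n+1)"
      using h[rule_format, of "n+1"] vcol_inner2[of m] by (auto simp: al_def)
    ultimately show "(\<forall>j. m$j \<ge> - be j) \<and> (\<Sum>j\<in>UNIV. m$j) \<le> al (n+1)" by blast
  next
    assume h: "(\<forall>j. m$j \<ge> - be j) \<and> (\<Sum>j\<in>UNIV. m$j) \<le> al (n+1)"
    show "\<forall>i\<in>{1..n+1}. vcol ix n i \<bullet> m \<ge> - of_int (a i)"
    proof
      fix i assume i: "i \<in> {1..n+1}"
      show "vcol ix n i \<bullet> m \<ge> - of_int (a i)"
      proof (cases "i \<le> n")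
        case True
        then have "i \<in> {1..n}" using i by auto
        then show ?thesis using h vcol_inner1[of i m] kap_ix[of i] by (metis be_def al_def minus_le_iff)
      next
        case False
        then have "i = n+1" using i by auto
        then show ?thesis using h vcol_inner2[of m] by (auto simp: al_def)
      qed
    qed
  qed
  then show ?thesis unfolding Delta_a_def by blast
qed

lemma ext_sub: "w extreme_point_of Delta_a ix n a \<Longrightarrow> w \<in> Wv ` {1..n+1}"
proof -
  assume e: "w extreme_point_of Delta_a ix n a"
  have wD: "w \<in> Delta_a ix n a" using e extreme_point_of_def by blast
  define s where "s j = w$j + be j" for j
  define s0 where "s0 = al (n+1) - (\<Sum>j\<in>UNIV. w$j)"
  have s_nn: "s j \<ge> 0" for j using wD unfolding Delta_a_eq s_def by (simp add: add.commute) (smt (verit))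
  have s0_nn: "s0 \<ge> 0" using wD by (auto simp: Delta_a_eq s0_def)
  have A: "\<not> (s j > 0 \<and> s l > 0)" if "j \<noteq> l" for j l
  proof
    assume h: "s j > 0 \<and> s l > 0"
    define ep where "ep = min (s j) (s l)"
    define d where "d = axis j ep - axis l ep"
    have ep: "ep > 0" "ep \<le> s j" "ep \<le> s l" using h by (auto simp: ep_def)
    have dj: "d $ j' = (if j' = j then ep else 0) - (if j' = l then ep else 0)" for j'
      by (simp add: d_def axis_def)
    have ds: "(\<Sum>j'\<in>UNIV. d $ j') = 0"
      by (simp add: dj sum_subtractf)
    have "w + d \<in> Delta_a ix n a" "w - d \<in> Delta_a ix n a"
      using wD ep s_nn that unfolding Delta_a_eq
      by (auto simp: dj sum.distrib sum_subtractf ds s_def)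
    then have "d = 0" using ext_pm[OF e] by blast
    then have "d $ j = 0" by simp
    then show False using dj[of j] that ep by simp
  qed
  have B: "\<not> (s j > 0 \<and> s0 > 0)" for j
  proof
    assume h: "s j > 0 \<and> s0 > 0"
    define ep where "ep = min (s j) s0"
    define d where "d = axis j ep"
    have ep: "ep > 0" "ep \<le> s j" "ep \<le> s0" using h by (auto simp: ep_def)
    have dj: "d $ j' = (if j' = j then ep else 0)" for j'
      by (simp add: d_def axis_def)
    have ds: "(\<Sum>j'\<in>UNIV. d $ j') = ep"
      by (simp add: dj)
    have "w + d \<in> Delta_a ix n a" "w - d \<in> Delta_a ix n a"
      using wD ep s_nn unfolding Delta_a_eq
      by (auto simp: dj sum.distrib sum_subtractf ds s_def s0_def)
    then have "d = 0" using ext_pm[OF e] by blast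
    then have "d $ j = 0" by simp
    then show False using dj[of j] ep by simp
  qed
  have sz: "w$l = - be l" if "s l = 0" for l using that unfolding s_def by linarith
  show ?thesis
  proof (cases "\<forall>j. s j = 0")
    case True
    then have "w = W0" unfolding W0_def using sz by (simp add: vec_eq_iff)
    then show ?thesis by (auto simp: Wv_def intro!: image_eqI[of _ _ "n+1"])
  next
    case False
    then obtain j where j: "s j > 0" using s_nn by (metis less_eq_real_def)
    have l0: "s l = 0" if "l \<noteq> j" for l using A[OF that] j s_nn[of l] by linarith
    have "s0 = 0" using B[of j] j s0_nn by linarith
    have sumw: "(\<Sum>j'\<in>UNIV. w$j') = w$j + (\<Sum>j'\<in>UNIV-{j}. w$j')"
      by (simp add: sum.remove)
    have "(\<Sum>j'\<in>UNIV-{j}. w$j') = (\<Sum>j'\<in>UNIV-{j}. - be j')"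
      by (rule sum.cong) (use l0 sz in auto)
    also have "\<dots> = - (S - al (n+1) - be j)"
      using sum_be by (simp add: sum_negf sum.remove[of UNIV j be] )
    finally have wj: "w$j = S - be j"
      using sumw \<open>s0 = 0\<close> unfolding s0_def by simp
    have "w = Wj j" unfolding Wj_def
      using wj l0 sz by (simp add: vec_eq_iff)
    then have "w = Wv (kap j)" using kap_le[of j] by (simp add: Wv_def)
    then show ?thesis using kap_in[of j] by auto
  qed
qed

end


context P5 begin

lemma Wj_comp: "Wj j $ j' = (if j' = j then S else 0) - be j'" by (simp add: Wj_def)
lemma W0_comp: "W0 $ j' = - be j'" by (simp add: W0_def)

lemma sum_Wj: "(\<Sum>j'\<in>UNIV. Wj j $ j') = al (n+1)"
  using sum_be by (simp add: Wj_comp sum_subtractf)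

lemma Wv_in: "i \<in> {1..n+1} \<Longrightarrow> Wv i \<in> Delta_a ix n a"
proof -
  assume i: "i \<in> {1..n+1}"
  show ?thesis
  proof (cases "i \<le> n")
    case True
    then show ?thesis using sum_Wj S_pos by (auto simp: Wv_def Delta_a_eq Wj_comp)
  next
    case False
    have "(\<Sum>j'\<in>UNIV. W0 $ j') = -(S - al (n+1))" using sum_be by (simp add: W0_comp sum_negf)
    then show ?thesis using False S_pos al_pos[of "n+1"] by (auto simp: Wv_def Delta_a_eq W0_comp)
  qed
qed

lemma ext_sup: "i \<in> {1..n+1} \<Longrightarrow> Wv i extreme_point_of Delta_a ix n a"
proof -
  assume i: "i \<in> {1..n+1}"
  have "Wv i \<notin> open_segment p q" if p: "p \<in> Delta_a ix n a" and q: "q \<in> Delta_a ix n a" for p q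
  proof
    assume "Wv i \<in> open_segment p q"
    then obtain u where ne: "p \<noteq> q" and u: "0 < u" "u < 1" and x: "Wv i = (1-u) *\<^sub>R p + u *\<^sub>R q"
      unfolding in_segment by blast
    have xc: "Wv i $ j = (1-u) * p$j + u * q$j" for j using x by (simp add: vec_eq_iff)
    have pc: "p$j \<ge> - be j" "q$j \<ge> - be j" for j
      using p q by (auto simp: Delta_a_eq)
    have pc2: "(\<Sum>j\<in>UNIV. p$j) \<le> al (n+1)" "(\<Sum>j\<in>UNIV. q$j) \<le> al (n+1)"
      using p q by (auto simp: Delta_a_eq)
    have tight: "p$j = q$j" if "Wv i $ j = - be j" for j
    proof -
      have "p$j = - be j \<and> q$j = - be j"
        by (rule seg_tight[OF u]) (use xc[of j] pc[of j] that in auto)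
      then show ?thesis by simp
    qed
    have "p = q"
    proof (cases "i \<le> n")
      case False
      then show ?thesis using tight by (simp add: Wv_def W0_comp vec_eq_iff)
    next
      case True
      let ?j = "ix i"
      have t2: "p$j = q$j" if "j \<noteq> ?j" for j using tight that True by (simp add: Wv_def Wj_comp)
      have sx: "(\<Sum>j\<in>UNIV. Wv i $ j) = (1-u) * (\<Sum>j\<in>UNIV. p$j) + u * (\<Sum>j\<in>UNIV. q$j)"
        by (simp add: xc sum.distrib sum_distrib_left)
      have "(\<Sum>j\<in>UNIV. Wv i $ j) = al (n+1)" using True sum_Wj by (simp add: Wv_def)
      then have "(1-u) * (- (\<Sum>j\<in>UNIV. p$j)) + u * (- (\<Sum>j\<in>UNIV. q$j)) = - al (n+1)" using sx by simp
      then have "- (\<Sum>j\<in>UNIV. p$j) = - al (n+1) \<and> - (\<Sum>j\<in>UNIV. q$j) = - al (n+1)"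
        by (rule seg_tight[OF u]) (use pc2 in auto)
      then have ss: "(\<Sum>j\<in>UNIV. p$j) = (\<Sum>j\<in>UNIV. q$j)" by simp
      have "p$?j + (\<Sum>j\<in>UNIV-{?j}. p$j) = q$?j + (\<Sum>j\<in>UNIV-{?j}. q$j)"
        using ss by (simp add: sum.remove)
      moreover have "(\<Sum>j\<in>UNIV-{?j}. p$j) = (\<Sum>j\<in>UNIV-{?j}. q$j)"
        by (rule sum.cong) (auto simp: t2)
      ultimately have "p$?j = q$?j" by simp
      then show ?thesis using t2 by (metis vec_eq_iff)
    qed
    then show False using ne by simp
  qed
  then show ?thesis unfolding extreme_point_of_def using Wv_in[OF i] by blast
qed

lemma ext_eq: "{w. w extreme_point_of Delta_a ix n a} = Wv ` {1..n+1}"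
  using ext_sub ext_sup by blast

end



definition "Prm w u \<longleftrightarrow> u \<in> latt \<and> (\<exists>c>0. u = c *\<^sub>R w) \<and> (\<forall>c. 0 < c \<and> c < 1 \<longrightarrow> c *\<^sub>R u \<notin> latt)"

lemma prm_unique:
  fixes w :: "real^'n::finite"
  assumes "Prm w u1" "Prm w u2" shows "u1 = u2"
proof -
  obtain c1 c2 where c: "c1 > 0" "c2 > 0" "u1 = c1 *\<^sub>R w" "u2 = c2 *\<^sub>R w"
    using assms unfolding Prm_def by blast
  have l: "u1 \<in> latt" "u2 \<in> latt" using assms unfolding Prm_def by auto
  have "\<not> c1 < c2"
  proof
    assume lt: "c1 < c2"
    have e: "(c1/c2) *\<^sub>R u2 = u1" using c by simp
    have h: "\<forall>c. 0 < c \<and> c < 1 \<longrightarrow> c *\<^sub>R u2 \<notin> latt" using assms(2) unfolding Prm_def by blast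
    have "0 < c1/c2" "c1/c2 < 1" using lt c by auto
    then have "(c1/c2) *\<^sub>R u2 \<notin> latt" using h by blast
    then show False using e l by simp
  qed
  moreover have "\<not> c2 < c1"
  proof
    assume lt: "c2 < c1"
    have e: "(c2/c1) *\<^sub>R u1 = u2" using c by simp
    have h: "\<forall>c. 0 < c \<and> c < 1 \<longrightarrow> c *\<^sub>R u1 \<notin> latt" using assms(1) unfolding Prm_def by blast
    have "0 < c2/c1" "c2/c1 < 1" using lt c by auto
    then have "(c2/c1) *\<^sub>R u1 \<notin> latt" using h by blast
    then show False using e l by simp
  qed
  ultimately show ?thesis using c by (simp add: not_less_iff_gr_or_eq)
qed

lemma prm_exists:
  fixes w :: "real^'n::finite"
  assumes w: "w \<in> latt" "w \<noteq> 0" shows "\<exists>u. Prm w u"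
proof -
  obtain j where j: "w $ j \<noteq> 0" using w(2) by (metis vec_eq_iff zero_index)
  obtain z where z: "w $ j = of_int z" using w(1) unfolding latt_def by (auto elim: Ints_cases)
  define N where "N = nat \<bar>z\<bar>"
  have N: "N \<ge> 1" "real N = \<bar>w$j\<bar>" using j z by (auto simp: N_def)
  define K where "K = {m \<in> {1..N}. (real m / real N) *\<^sub>R w \<in> latt}"
  have NK: "N \<in> K" using N w unfolding K_def by auto
  have fK: "finite K" unfolding K_def by auto
  define m0 where "m0 = Min K"
  have m0K: "m0 \<in> K" using fK NK m0_def Min_in by blast
  have m0min: "m \<in> K \<Longrightarrow> m0 \<le> m" for m using fK m0_def by simp
  define u where "u = (real m0 / real N) *\<^sub>R w"
  have m0pos: "m0 \<ge> 1" using m0K unfolding K_def by auto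
  have "Prm w u"
    unfolding Prm_def
  proof (intro conjI allI impI)
    show "u \<in> latt" using m0K unfolding K_def u_def by auto
    show "\<exists>c>0. u = c *\<^sub>R w" using m0pos N unfolding u_def by (intro exI[of _ "real m0 / real N"]) auto
    fix t :: real assume t: "0 < t \<and> t < 1"
    show "t *\<^sub>R u \<notin> latt"
    proof
      assume tl: "t *\<^sub>R u \<in> latt"
      have "(t *\<^sub>R u) $ j \<in> \<int>" using tl unfolding latt_def by auto
      moreover have "(t *\<^sub>R u) $ j = t * real m0 / real N * w $ j" by (simp add: u_def)
      ultimately have "t * real m0 / real N * w $ j \<in> \<int>" by simp
      moreover have "w $ j = real N \<or> w $ j = - real N" using N by linarith
      ultimately have "t * real m0 \<in> \<int>" using N
        by (auto simp: minus_in_Ints_iff)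
      then obtain m' where m': "t * real m0 = of_int m'" by (auto elim: Ints_cases)
      have "t * real m0 > 0" using t m0pos by simp
      then have "of_int m' > (0::real)" using m' by simp
      moreover have "t * real m0 < 1 * real m0" using t m0pos by (intro mult_strict_right_mono) auto
      then have "of_int m' < real m0" using m' by simp
      ultimately have m'b: "0 < m'" "m' < int m0" by linarith+
      define m where "m = nat m'"
      have "real m = t * real m0" using m' m'b by (simp add: m_def)
      have "m \<in> K"
        unfolding K_def
      proof (intro CollectI conjI)
        show "m \<in> {1..N}" using m'b m0K unfolding K_def m_def by auto
        have "(real m / real N) *\<^sub>R w = t *\<^sub>R u" using \<open>real m = t * real m0\<close> by (simp add: u_def)
        then show "(real m / real N) *\<^sub>R w \<in> latt" using tl by simp
      qed
      then have "m0 \<le> m" by (rule m0min)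
      then show False using m'b unfolding m_def by linarith
    qed
  qed
  then show ?thesis by blast
qed

lemma prim_prop:
  fixes w :: "real^'n::finite"
  assumes w: "w \<in> latt" "w \<noteq> 0"
  shows "\<exists>c. 0 < c \<and> c \<le> 1 \<and> prim w = c *\<^sub>R w \<and> prim w \<in> latt"
proof -
  have ex1: "\<exists>!u. Prm w u" using prm_exists[OF w] prm_unique by blast
  have P: "Prm w (prim w)"
    unfolding prim_def using theI'[OF ex1[unfolded Prm_def]] by (simp add: Prm_def)
  then obtain c where c: "c > 0" "prim w = c *\<^sub>R w" "prim w \<in> latt" unfolding Prm_def by blast
  have "c \<le> 1"
  proof (rule ccontr)
    assume "\<not> c \<le> 1"
    then have "0 < 1/c" "1/c < 1" using c by auto
    moreover have "(1/c) *\<^sub>R prim w = w" using c by simp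
    moreover have "\<forall>t. 0 < t \<and> t < 1 \<longrightarrow> t *\<^sub>R prim w \<notin> latt" using P unfolding Prm_def by blast
    ultimately show False using w by metis
  qed
  then show ?thesis using c by blast
qed



context P5 begin

definition "X x k = (if k \<le> n then x $ ix k else (0::real))"
definition "Aa x = (\<Sum>k=1..n. al k * x $ ix k)"
definition "M i = (if i \<le> n then al (n+1) else al n)"

lemma al_int: "al k \<in> \<int>" by (simp add: al_def)
lemma be_int: "be j \<in> \<int>" by (simp add: be_def al_int)
lemma S_int: "S \<in> \<int>" unfolding S_def by (simp add: al_int Ints_sum)

lemma Wv_comp: "i \<in> {1..n+1} \<Longrightarrow> k \<in> {1..n} \<Longrightarrow> Wv i $ ix k = (if k = i then S else 0) - al k"
  by (auto simp: Wv_def Wj_comp W0_comp be_def)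

lemma Wv_latt: "i \<in> {1..n+1} \<Longrightarrow> Wv i \<in> latt"
  unfolding latt_def by (auto simp: Wv_def Wj_comp W0_comp be_int S_int)

lemma exists_other: "i \<in> {1..n+1} \<Longrightarrow> \<exists>m\<in>{1..n}. m \<noteq> i"
proof -
  assume "i \<in> {1..n+1}"
  define m where "m = (if i = 1 then 2 else (1::nat))"
  have "m \<in> {1..n}" "m \<noteq> i" using n4 by (auto simp: m_def)
  then show ?thesis by blast
qed

lemma Wv_nz: "i \<in> {1..n+1} \<Longrightarrow> Wv i \<noteq> 0"
proof
  assume i: "i \<in> {1..n+1}" and z: "Wv i = 0"
  obtain m where m: "m \<in> {1..n}" "m \<noteq> i" using exists_other[OF i] by blast
  have "Wv i $ ix m = - al m" using Wv_comp[OF i m(1)] m by simp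
  then show False using z al_pos[of m] m by simp
qed

definition "cc i = (SOME c. 0 < c \<and> c \<le> 1 \<and> prim (Wv i) = c *\<^sub>R Wv i \<and> prim (Wv i) \<in> latt)"

lemma cc_prop: "i \<in> {1..n+1} \<Longrightarrow> 0 < cc i \<and> cc i \<le> 1 \<and> prim (Wv i) = cc i *\<^sub>R Wv i \<and> prim (Wv i) \<in> latt"
  unfolding cc_def by (rule someI_ex) (use prim_prop[OF Wv_latt Wv_nz] in auto)

lemma cc_ge: "i \<in> {1..n+1} \<Longrightarrow> m \<in> {1..n} \<Longrightarrow> m \<noteq> i \<Longrightarrow> cc i * al m \<ge> 1"
proof -
  assume i: "i \<in> {1..n+1}" and m: "m \<in> {1..n}" "m \<noteq> i"
  have cp: "0 < cc i" "prim (Wv i) = cc i *\<^sub>R Wv i" "prim (Wv i) \<in> latt" using cc_prop[OF i] by auto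
  have "(cc i *\<^sub>R Wv i) $ ix m \<in> \<int>" using cp unfolding latt_def by auto
  moreover have "(cc i *\<^sub>R Wv i) $ ix m = - (cc i * al m)" using Wv_comp[OF i m(1)] m(2) by simp
  ultimately have "cc i * al m \<in> \<int>" by (simp add: minus_in_Ints_iff)
  moreover have "cc i * al m > 0" using cp al_pos[of m] m by simp
  ultimately show ?thesis
  proof -
    assume "cc i * al m \<in> \<int>" "cc i * al m > 0"
    then obtain z where z: "cc i * al m = of_int z" by (auto elim: Ints_cases)
    then have "z > 0" using \<open>cc i * al m > 0\<close> by simp
    then have "z \<ge> 1" by simp
    then show ?thesis using z by simp
  qed
qed

lemma Lam_eq: "Lam ix n a = (\<lambda>i. cc i *\<^sub>R Wv i) ` {1..n+1}"
  unfolding Lam_def ext_eq using cc_prop by (auto simp: image_image)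

lemma inner_Wv: "i \<in> {1..n+1} \<Longrightarrow> Wv i \<bullet> x = S * X x i - Aa x"
proof -
  assume i: "i \<in> {1..n+1}"
  have "Wv i \<bullet> x = (\<Sum>k=1..n. Wv i $ ix k * x $ ix k)"
    unfolding inner_vec_def by (simp add: sum_reidx)
  also have "\<dots> = (\<Sum>k=1..n. (if k = i then S * x $ ix k else 0) - al k * x $ ix k)"
    by (rule sum.cong) (auto simp: Wv_comp[OF i] algebra_simps)
  also have "\<dots> = (\<Sum>k=1..n. (if k = i then S * x $ ix k else 0)) - Aa x"
    unfolding Aa_def by (simp add: sum_subtractf)
  also have "(\<Sum>k=1..n. (if k = i then S * x $ ix k else 0)) = S * X x i"
    using i by (auto simp: X_def)
  finally show ?thesis .
qed

lemma vcol_Wv: "i \<in> {1..n+1} \<Longrightarrow> k \<in> {1..n+1} \<Longrightarrow> - (vcol ix n k \<bullet> Wv i) = al k - (if k = i then S else 0)"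
proof -
  assume i: "i \<in> {1..n+1}" and k: "k \<in> {1..n+1}"
  show ?thesis
  proof (cases "k \<le> n")
    case True
    then show ?thesis using vcol_inner1[of k "Wv i"] Wv_comp[OF i, of k] k by auto
  next
    case False
    then have kk: "k = n+1" using k by auto
    show ?thesis
    proof (cases "i \<le> n")
      case True
      then show ?thesis using kk vcol_inner2[of "Wv i"] sum_Wj by (simp add: Wv_def)
    next
      case False
      then have "i = n+1" using i by auto
      moreover have "(\<Sum>j'\<in>UNIV. W0 $ j') = -(S - al (n+1))" using sum_be by (simp add: W0_comp sum_negf)
      ultimately show ?thesis using kk vcol_inner2[of "Wv i"] by (simp add: Wv_def)
    qed
  qed
qed

end


context P5 begin

lemma al_le_M: "i \<in> {1..n+1} \<Longrightarrow> k \<in> {1..n+1} \<Longrightarrow> k \<noteq> i \<Longrightarrow> al k \<le> M i"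
  unfolding M_def using al_mono by auto

lemma bvec_eq: "i \<in> {1..n+1} \<Longrightarrow> bvec ix n (cc i *\<^sub>R Wv i) = cc i * M i"
proof -
  assume i: "i \<in> {1..n+1}"
  have cp: "0 < cc i" using cc_prop[OF i] by auto
  have set: "{- (vcol ix n k \<bullet> (cc i *\<^sub>R Wv i)) | k. k \<in> {1..n+1}} =
             (\<lambda>k. cc i * (al k - (if k = i then S else 0))) ` {1..n+1}"
  proof -
    have "- (vcol ix n k \<bullet> (cc i *\<^sub>R Wv i)) = cc i * (al k - (if k = i then S else 0))" if "k \<in> {1..n+1}" for k
    proof -
      have "- (vcol ix n k \<bullet> (cc i *\<^sub>R Wv i)) = cc i * (- (vcol ix n k \<bullet> Wv i))"
        by (simp add: inner_scaleR_right)
      then show ?thesis using vcol_Wv[OF i that] by simp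
    qed
    then have "(\<lambda>k. - (vcol ix n k \<bullet> (cc i *\<^sub>R Wv i))) ` {1..n+1} = (\<lambda>k. cc i * (al k - (if k = i then S else 0))) ` {1..n+1}"
      by (intro image_cong) auto
    moreover have "{- (vcol ix n k \<bullet> (cc i *\<^sub>R Wv i)) | k. k \<in> {1..n+1}} = (\<lambda>k. - (vcol ix n k \<bullet> (cc i *\<^sub>R Wv i))) ` {1..n+1}"
      by auto
    ultimately show ?thesis by simp
  qed
  obtain m where m: "m \<in> {1..n}" "m \<noteq> i" using exists_other[OF i] by blast
  have M1: "1 \<le> cc i * M i"
  proof -
    have "1 \<le> cc i * al m" using cc_ge[OF i m] .
    also have "\<dots> \<le> cc i * M i" using al_le_M[OF i _ m(2)] m(1) cp by (intro mult_left_mono) auto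
    finally show ?thesis .
  qed
  define k0 where "k0 = (if i \<le> n then n+1 else n)"
  have k0: "k0 \<in> {1..n+1}" "k0 \<noteq> i" "al k0 = M i" using i n4 by (auto simp: k0_def M_def)
  have "Max (insert 1 ((\<lambda>k. cc i * (al k - (if k = i then S else 0))) ` {1..n+1})) = cc i * M i"
  proof (rule Max_eqI)
    show "finite (insert 1 ((\<lambda>k. cc i * (al k - (if k = i then S else 0))) ` {1..n+1}))" by simp
    show "cc i * M i \<in> insert 1 ((\<lambda>k. cc i * (al k - (if k = i then S else 0))) ` {1..n+1})"
      using k0 by (intro insertI2 image_eqI[of _ _ k0]) auto
    fix y assume "y \<in> insert 1 ((\<lambda>k. cc i * (al k - (if k = i then S else 0))) ` {1..n+1})"
    then consider "y = 1" | k where "k \<in> {1..n+1}" "y = cc i * (al k - (if k = i then S else 0))" by auto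
    then show "y \<le> cc i * M i"
    proof cases
      case 1 then show ?thesis using M1 by simp
    next
      case 2
      have "al k - (if k = i then S else 0) \<le> M i"
      proof (cases "k = i")
        case True
        have "al k < S" using S_gt 2 by auto
        moreover have "0 \<le> M i" using k0 al_pos by (metis less_imp_le)
        ultimately show ?thesis using True by simp
      next
        case False then show ?thesis using al_le_M[OF i 2(1)] by simp
      qed
      then show ?thesis using 2 cp by (simp add: mult_left_mono)
    qed
  qed
  then show ?thesis unfolding bvec_def set .
qed

lemma Delta_b_eq: "Delta_b ix n a = {x. \<forall>i\<in>{1..n+1}. S * X x i - Aa x \<ge> - M i}"
proof -
  have "(cc i *\<^sub>R Wv i) \<bullet> x \<ge> - bvec ix n (cc i *\<^sub>R Wv i) \<longleftrightarrow> S * X x i - Aa x \<ge> - M i"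
    if i: "i \<in> {1..n+1}" for i x
  proof -
    have cp: "0 < cc i" using cc_prop[OF i] by auto
    have "(cc i *\<^sub>R Wv i) \<bullet> x \<ge> - bvec ix n (cc i *\<^sub>R Wv i) \<longleftrightarrow> cc i * (Wv i \<bullet> x) \<ge> cc i * (- M i)"
      using bvec_eq[OF i] by simp
    also have "\<dots> \<longleftrightarrow> Wv i \<bullet> x \<ge> - M i" using cp by (rule mult_le_cancel_left_pos)
    finally show ?thesis using inner_Wv[OF i] by simp
  qed
  then show ?thesis unfolding Delta_b_def Lam_eq by auto
qed

definition "C i = 1 / cc i"

lemma Delta_mK_eq: "Delta_mK ix n a = {x. \<forall>i\<in>{1..n+1}. Wv i \<bullet> x \<ge> - C i}"
proof -
  have "(cc i *\<^sub>R Wv i) \<bullet> x \<ge> -1 \<longleftrightarrow> Wv i \<bullet> x \<ge> - C i"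
    if i: "i \<in> {1..n+1}" for i x
  proof -
    have cp: "0 < cc i" using cc_prop[OF i] by auto
    have "(cc i *\<^sub>R Wv i) \<bullet> x \<ge> -1 \<longleftrightarrow> cc i * (Wv i \<bullet> x) \<ge> cc i * (- C i)"
      using cp by (simp add: C_def)
    also have "\<dots> \<longleftrightarrow> Wv i \<bullet> x \<ge> - C i" using cp by (rule mult_le_cancel_left_pos)
    finally show ?thesis .
  qed
  then show ?thesis unfolding Delta_mK_def Lam_eq by auto
qed

lemma C_ge1: "i \<in> {1..n+1} \<Longrightarrow> C i \<ge> 1"
  using cc_prop[of i] by (auto simp: C_def)

lemma C_le: "i \<in> {1..n+1} \<Longrightarrow> m \<in> {1..n+1} \<Longrightarrow> m \<noteq> i \<Longrightarrow> C i \<le> al m"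
proof -
  assume i: "i \<in> {1..n+1}" and m: "m \<in> {1..n+1}" "m \<noteq> i"
  have cp: "0 < cc i" using cc_prop[OF i] by auto
  have base: "C i \<le> al m'" if "m' \<in> {1..n}" "m' \<noteq> i" for m'
  proof -
    have "1 \<le> cc i * al m'" using cc_ge[OF i that] .
    then show ?thesis using cp by (simp add: C_def divide_le_eq mult.commute)
  qed
  show ?thesis
  proof (cases "m \<le> n")
    case True then show ?thesis using base m by auto
  next
    case False
    then have "m = n+1" using m by auto
    obtain m' where m': "m' \<in> {1..n}" "m' \<noteq> i" using exists_other[OF i] by blast
    have "al m' \<le> al m" using al_mono m' \<open>m = n+1\<close> by auto
    then show ?thesis using base[OF m'] by simp
  qed
qed

lemma C_lt_S: "i \<in> {1..n+1} \<Longrightarrow> C i < S"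
proof -
  assume i: "i \<in> {1..n+1}"
  obtain m where m: "m \<in> {1..n}" "m \<noteq> i" using exists_other[OF i] by blast
  have "C i \<le> al m" using C_le[OF i _ m(2)] m(1) by auto
  also have "al m < S" using S_gt m(1) by auto
  finally show ?thesis .
qed

end


context P5 begin

definition "Vs = insert 0 (vcol ix n ` {1..n+1})"

lemma X_int: "x \<in> latt \<Longrightarrow> X x k \<in> \<int>" by (auto simp: X_def latt_def)
lemma X_top[simp]: "X x (n+1) = 0" "X x (Suc n) = 0" by (simp_all add: X_def)
lemma x_X: "x $ j = X x (kap j)" using kap_le[of j] by (simp add: X_def)

lemma Aa_ext: "Aa x = (\<Sum>k=1..n+1. al k * X x k)"
  unfolding Aa_def by (simp add: X_def)

lemma vec_from_X: "(\<forall>k\<in>{1..n}. X x k = X y k) \<Longrightarrow> x = y"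
proof -
  assume h: "\<forall>k\<in>{1..n}. X x k = X y k"
  show "x = y" unfolding vec_eq_iff
  proof
    fix j
    have "X x (kap j) = X y (kap j)" using h kap_in[of j] by blast
    then show "x $ j = y $ j" using x_X[of x j] x_X[of y j] by simp
  qed
qed

lemma X_axis: "k \<in> {1..n} \<Longrightarrow> m \<in> {1..n} \<Longrightarrow> X (axis (ix k) c) m = (if m = k then c else 0)"
  by (auto simp: X_def axis_def)

lemma X_vcol: "k \<in> {1..n+1} \<Longrightarrow> m \<in> {1..n} \<Longrightarrow> X (vcol ix n k) m = (if k \<le> n then (if m = k then 1 else 0) else -1)"
proof -
  assume k: "k \<in> {1..n+1}" and m: "m \<in> {1..n}"
  show ?thesis
  proof (cases "k \<le> n")
    case True
    then have "vcol ix n k = axis (ix k) 1" by (simp add: vcol_def ebas_def)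
    then show ?thesis using X_axis[of k m 1] True k m by auto
  next
    case False
    then show ?thesis using m by (simp add: vcol_def X_def)
  qed
qed

lemma int_pos_ge1: "(z::real) \<in> \<int> \<Longrightarrow> z > 0 \<Longrightarrow> z \<ge> 1"
proof -
  assume "z \<in> \<int>" "z > 0"
  then obtain m where m: "z = of_int m" by (auto elim: Ints_cases)
  then have "m > 0" using \<open>z > 0\<close> by simp
  then have "m \<ge> 1" by simp
  then show ?thesis using m by simp
qed

lemma int_lt_le: "(z::real) \<in> \<int> \<Longrightarrow> w \<in> \<int> \<Longrightarrow> z < w \<Longrightarrow> z + 1 \<le> w"
proof -
  assume "z \<in> \<int>" "w \<in> \<int>" "z < w"
  then have "w - z \<in> \<int>" "w - z > 0" by auto
  then have "w - z \<ge> 1" by (rule int_pos_ge1)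
  then show ?thesis by simp
qed

lemma small_latt:
  fixes be' :: "nat \<Rightarrow> real" and B :: real
  assumes x: "x \<in> latt" and bp: "\<forall>k\<in>{1..n+1}. be' k > 0" and B2: "\<forall>k\<in>{1..n}. B < 2 * be' k"
    and h0: "(\<Sum>k=1..n. be' k * X x k) \<le> B"
    and hi: "\<forall>i\<in>{1..n}. (\<Sum>k=1..n+1. be' k * (X x k - X x i)) \<le> be' (n+1)"
  shows "x \<in> Vs"
proof (cases "\<forall>k\<in>{1..n}. X x k \<ge> 0")
  case True
  have bp': "be' k > 0" if "k \<in> {1..n}" for k using bp that by auto
  have tnn: "be' k * X x k \<ge> 0" if "k \<in> {1..n}" for k using bp'[OF that] True that by auto
  have le: "be' k * X x k \<le> B" if "k \<in> {1..n}" for k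
  proof -
    have "be' k * X x k \<le> (\<Sum>k=1..n. be' k * X x k)"
      by (rule member_le_sum) (use that tnn in auto)
    then show ?thesis using h0 by simp
  qed
  have le1: "X x k \<le> 1" if k: "k \<in> {1..n}" for k
  proof (rule ccontr)
    assume "\<not> X x k \<le> 1"
    then have "X x k \<ge> 2" using int_lt_le[of 1 "X x k"] X_int[OF x] by auto
    then have "be' k * X x k \<ge> be' k * 2" using bp' k by (intro mult_left_mono) (auto intro: less_imp_le)
    moreover have "B < 2 * be' k" using B2 k by blast
    ultimately show False using le[OF k] by simp
  qed
  have one: "\<not> (X x k \<ge> 1 \<and> X x l \<ge> 1)" if "k \<in> {1..n}" "l \<in> {1..n}" "k \<noteq> l" for k l
  proof
    assume h: "X x k \<ge> 1 \<and> X x l \<ge> 1"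
    have "be' k * X x k + be' l * X x l = (\<Sum>m\<in>{k,l}. be' m * X x m)" using that by simp
    also have "\<dots> \<le> (\<Sum>k=1..n. be' k * X x k)"
      by (rule sum_mono2) (use that tnn in auto)
    finally have f1: "be' k * X x k + be' l * X x l \<le> B" using h0 by simp
    have f2: "be' k * X x k \<ge> be' k" using h bp'[OF that(1)] by simp
    have f3: "be' l * X x l \<ge> be' l" using h bp'[OF that(2)] by simp
    have f4: "B < 2 * be' k" using B2 that(1) by blast
    have f5: "B < 2 * be' l" using B2 that(2) by blast
    show False using f1 f2 f3 f4 f5 by linarith
  qed
  have z01: "X x k = 0 \<or> X x k = 1" if "k \<in> {1..n}" for k
  proof -
    have "X x k \<ge> 0" "X x k \<le> 1" using True le1 that by auto
    moreover have "X x k > 0 \<Longrightarrow> X x k \<ge> 1" using int_pos_ge1 X_int[OF x] by auto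
    ultimately show ?thesis by linarith
  qed
  show ?thesis
  proof (cases "\<exists>k\<in>{1..n}. X x k = 1")
    case False
    then have "x = 0" using z01 by (intro vec_from_X) (auto simp: X_def)
    then show ?thesis by (simp add: Vs_def)
  next
    case True
    then obtain k where k: "k \<in> {1..n}" "X x k = 1" by blast
    have "x = vcol ix n k"
    proof (rule vec_from_X, intro ballI)
      fix m assume m: "m \<in> {1..n}"
      show "X x m = X (vcol ix n k) m"
        using X_vcol[of k m] k m z01[OF m] one[OF k(1) m] by auto
    qed
    then show ?thesis using k by (auto simp: Vs_def)
  qed
next
  case False
  obtain i where i: "i \<in> {1..n}" "\<forall>k\<in>{1..n}. X x i \<le> X x k"
  proof -
    have ne: "X x ` {1..n} \<noteq> {}" using n4 by auto
    have "Min (X x ` {1..n}) \<in> X x ` {1..n}" by (rule Min_in) (use ne in auto)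
    then obtain i where i: "i \<in> {1..n}" "X x i = Min (X x ` {1..n})" by auto
    have "\<forall>k\<in>{1..n}. X x i \<le> X x k" using i(2) by simp
    then show ?thesis using that i(1) by blast
  qed
  have neg: "X x i < 0"
  proof -
    obtain k where k: "k \<in> {1..n}" "X x k < 0" using False by (auto simp: not_le)
    then show ?thesis using i(2) by force
  qed
  have terms: "be' k * (X x k - X x i) \<ge> 0" if "k \<in> {1..n+1}" for k
  proof -
    have "X x k - X x i \<ge> 0"
    proof (cases "k \<le> n")
      case True then show ?thesis using i that by auto
    next
      case False then have "k = n+1" using that by auto
      then show ?thesis using neg by simp
    qed
    moreover have "be' k > 0" using bp that by blast
    ultimately show ?thesis by simp
  qed
  have split: "(\<Sum>k=1..n+1. be' k * (X x k - X x i)) = be' (n+1) * (- X x i) + (\<Sum>k=1..n. be' k * (X x k - X x i))"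
    by simp
  have rest: "(\<Sum>k=1..n. be' k * (X x k - X x i)) \<ge> 0" by (rule sum_nonneg) (use terms in auto)
  have Xi: "X x i = -1"
  proof -
    have a1: "X x i \<le> -1" using int_lt_le[of "X x i" 0] X_int[OF x] neg by auto
    have "be' (n+1) * (- X x i) \<le> be' (n+1) * 1" using hi i(1) split rest by fastforce
    moreover have "be' (n+1) > 0" using bp by auto
    ultimately have "- X x i \<le> 1" using mult_le_cancel_left_pos by blast
    then show ?thesis using a1 by simp
  qed
  then have "(\<Sum>k=1..n. be' k * (X x k - X x i)) \<le> 0" using hi i(1) split by fastforce
  then have "(\<Sum>k=1..n. be' k * (X x k - X x i)) = 0" using rest by simp
  then have "\<forall>k\<in>{1..n}. be' k * (X x k - X x i) = 0"
    using sum_nonneg_eq_0_iff[of "{1..n}" "\<lambda>k. be' k * (X x k - X x i)"] terms by auto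
  then have "\<forall>k\<in>{1..n}. X x k = -1"
  proof (intro ballI)
    fix k assume h: "\<forall>k\<in>{1..n}. be' k * (X x k - X x i) = 0" and k: "k \<in> {1..n}"
    have "be' k * (X x k - X x i) = 0" using h k by blast
    moreover have "be' k > 0" using bp k by auto
    ultimately have "X x k - X x i = 0" by simp
    then show "X x k = -1" using Xi by simp
  qed
  then have "x = vcol ix n (n+1)" by (intro vec_from_X) (auto simp: X_vcol)
  then show ?thesis by (auto simp: Vs_def)
qed

end


context P5 begin

lemma X_lin: "X (u *\<^sub>R x + v *\<^sub>R y) k = u * X x k + v * X y k"
  by (simp add: X_def)

lemma vcol_latt: "k \<in> {1..n+1} \<Longrightarrow> vcol ix n k \<in> latt"
  by (auto simp: vcol_def ebas_def latt_def axis_def)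

lemma Vs_latt: "Vs \<subseteq> latt"
  using vcol_latt by (auto simp: Vs_def latt_def)

lemma bvec_ge: "k \<in> {1..n+1} \<Longrightarrow> - (vcol ix n k \<bullet> lam) \<le> bvec ix n lam"
  unfolding bvec_def by (rule Max_ge) auto

lemma bvec_ge1: "1 \<le> bvec ix n lam"
  unfolding bvec_def by (rule Max_ge) auto

lemma Vs_Delta_b: "Vs \<subseteq> Delta_b ix n a"
proof
  fix x assume "x \<in> Vs"
  then consider "x = 0" | k where "k \<in> {1..n+1}" "x = vcol ix n k" by (auto simp: Vs_def)
  then show "x \<in> Delta_b ix n a"
  proof cases
    case 1
    have "\<forall>lam. - bvec ix n lam \<le> 0" using bvec_ge1 by (smt (verit))
    then show ?thesis unfolding Delta_b_def using 1 by auto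
  next
    case 2
    have "\<forall>lam. - bvec ix n lam \<le> lam \<bullet> vcol ix n k" using bvec_ge[OF 2(1)] by (smt (verit) inner_commute)
    then show ?thesis unfolding Delta_b_def using 2 by auto
  qed
qed

lemma sum_diff_form: "(\<Sum>k=1..n+1. al k * (X x k - X x i)) = Aa x - S * X x i"
proof -
  have "(\<Sum>k=1..n+1. al k * (X x k - X x i)) = (\<Sum>k=1..n+1. al k * X x k) - (\<Sum>k=1..n+1. al k) * X x i"
    by (simp only: right_diff_distrib sum_subtractf sum_distrib_right)
  then show ?thesis unfolding Aa_ext S_def .
qed

lemma cond4_sub:
  assumes c4: "\<lfloor>al n / al 1\<rfloor> = 1"
  shows "Delta_b ix n a \<inter> latt \<subseteq> Vs"
proof
  fix x assume x: "x \<in> Delta_b ix n a \<inter> latt"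
  have cons: "S * X x i - Aa x \<ge> - M i" if "i \<in> {1..n+1}" for i
    using x that unfolding Delta_b_eq by blast
  have a1: "al 1 > 0" using al_pos[of 1] by simp
  have "al n / al 1 < 2" using c4 by linarith
  then have an: "al n < 2 * al 1" using a1 by (simp add: divide_less_eq)
  show "x \<in> Vs"
  proof (rule small_latt[of x al "al n"])
    show "x \<in> latt" using x by blast
    show "\<forall>k\<in>{1..n+1}. 0 < al k" using al_pos by blast
    show "\<forall>k\<in>{1..n}. al n < 2 * al k"
    proof
      fix k assume k: "k \<in> {1..n}"
      have "al 1 \<le> al k" using al_mono[of 1 k] k by auto
      then show "al n < 2 * al k" using an by linarith
    qed
    have "S * X x (n+1) - Aa x \<ge> - M (n+1)" using cons[of "n+1"] by auto
    then show "(\<Sum>k=1..n. al k * X x k) \<le> al n" by (simp add: M_def Aa_def X_def)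
    show "\<forall>i\<in>{1..n}. (\<Sum>k=1..n+1. al k * (X x k - X x i)) \<le> al (n+1)"
    proof
      fix i assume i: "i \<in> {1..n}"
      then have "S * X x i - Aa x \<ge> - M i" using cons by auto
      moreover have "M i = al (n+1)" using i by (simp add: M_def)
      ultimately show "(\<Sum>k=1..n+1. al k * (X x k - X x i)) \<le> al (n+1)"
        unfolding sum_diff_form by linarith
    qed
  qed
qed

lemma cond4_not:
  assumes c4: "\<lfloor>al n / al 1\<rfloor> \<noteq> 1"
  shows "\<exists>y \<in> Delta_b ix n a \<inter> latt. y \<notin> Vs"
proof -
  have a1: "al 1 > 0" using al_pos[of 1] by simp
  have "al 1 \<le> al n" using al_mono[of 1 n] n4 by auto
  then have "al n / al 1 \<ge> 1" using a1 by simp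
  then have "\<lfloor>al n / al 1\<rfloor> \<ge> 1" by linarith
  then have "\<lfloor>al n / al 1\<rfloor> \<ge> 2" using c4 by linarith
  then have "al n / al 1 \<ge> 2" by linarith
  then have an: "al n \<ge> 2 * al 1" using a1 by (simp add: le_divide_eq)
  have ann: "al (n+1) \<ge> al n" using al_mono[of n "n+1"] n4 by auto
  define y where "y = axis (ix 1) (2::real)"
  have Xy: "X y k = (if k = 1 then 2 else 0)" if "k \<in> {1..n}" for k
    using X_axis[of 1 k 2] that n4 by (simp add: y_def)
  have Ay: "Aa y = 2 * al 1"
  proof -
    have "Aa y = (\<Sum>k=1..n. if k = 1 then 2 * al 1 else 0)"
      unfolding Aa_def
    proof (rule sum.cong)
      fix k assume k: "k \<in> {1..n}"
      then have "y $ ix k = (if k = 1 then 2 else 0)" using Xy[OF k] by (simp add: X_def)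
      then show "al k * y $ ix k = (if k = 1 then 2 * al 1 else 0)" by simp
    qed simp
    also have "\<dots> = 2 * al 1" using n4 by simp
    finally show ?thesis .
  qed
  have yD: "y \<in> Delta_b ix n a"
    unfolding Delta_b_eq
  proof (intro CollectI ballI)
    fix i assume i: "i \<in> {1..n+1}"
    show "S * X y i - Aa y \<ge> - M i"
    proof (cases "i \<le> n")
      case False
      then show ?thesis using an Ay by (simp add: X_def M_def)
    next
      case True
      show ?thesis
      proof (cases "i = 1")
        case True
        then have "X y i = 2" using Xy[of 1] n4 by auto
        moreover have "2 * al 1 < 2 * S" using S_gt[of 1] by auto
        ultimately show ?thesis using Ay M_def al_pos[of "n+1"] True n4
          by (simp add: M_def)
      next
        case False
        then have "X y i = 0" using Xy[of i] i \<open>i \<le> n\<close> by auto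
        then show ?thesis using Ay an ann \<open>i \<le> n\<close> by (simp add: M_def)
      qed
    qed
  qed
  have yl: "y \<in> latt" by (auto simp: y_def latt_def axis_def)
  have "y \<notin> Vs"
  proof
    assume "y \<in> Vs"
    then consider "y = 0" | k where "k \<in> {1..n+1}" "y = vcol ix n k" by (auto simp: Vs_def)
    then show False
    proof cases
      case 1 then show False using Xy[of 1] n4 by (simp add: X_def)
    next
      case 2
      have "X y 1 = 2" using Xy[of 1] n4 by auto
      moreover have "X (vcol ix n k) 1 \<noteq> 2" using X_vcol[OF 2(1), of 1] n4 by auto
      ultimately show False using 2 by simp
    qed
  qed
  then show ?thesis using yD yl by blast
qed

definition "Q = {x. (\<Sum>k=1..n. 1 * X x k) \<le> 1 \<and> (\<forall>i\<in>{1..n}. (\<Sum>k=1..n+1. 1 * (X x k - X x i)) \<le> 1)}"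

lemma Q_convex: "convex Q"
proof (rule convexI)
  fix x y u v assume x: "x \<in> Q" and y: "y \<in> Q" and uv0: "0 \<le> u" "0 \<le> v" "u + v = (1::real)"
  have uv: "0 \<le> u \<and> 0 \<le> v \<and> u + v = (1::real)" using uv0 by auto
  have s1: "(\<Sum>k=1..n. 1 * X (u *\<^sub>R x + v *\<^sub>R y) k) = u * (\<Sum>k=1..n. 1 * X x k) + v * (\<Sum>k=1..n. 1 * X y k)"
    by (simp add: X_lin sum.distrib sum_distrib_left)
  have s2: "(\<Sum>k=1..n+1. 1 * (X (u *\<^sub>R x + v *\<^sub>R y) k - X (u *\<^sub>R x + v *\<^sub>R y) i)) =
     u * (\<Sum>k=1..n+1. 1 * (X x k - X x i)) + v * (\<Sum>k=1..n+1. 1 * (X y k - X y i))" for i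
    by (simp add: X_lin sum.distrib sum_distrib_left sum_subtractf algebra_simps)
  have a: "(\<Sum>k=1..n. 1 * X x k) \<le> 1" "(\<Sum>k=1..n. 1 * X y k) \<le> 1" using x y by (auto simp: Q_def)
  have "u * (\<Sum>k=1..n. 1 * X x k) + v * (\<Sum>k=1..n. 1 * X y k) \<le> u * 1 + v * 1"
    using uv a by (intro add_mono mult_left_mono) auto
  then have c1: "(\<Sum>k=1..n. 1 * X (u *\<^sub>R x + v *\<^sub>R y) k) \<le> 1" using s1 uv by simp
  have c2: "(\<Sum>k=1..n+1. 1 * (X (u *\<^sub>R x + v *\<^sub>R y) k - X (u *\<^sub>R x + v *\<^sub>R y) i)) \<le> 1"
    if i: "i \<in> {1..n}" for i
  proof -
    have b: "(\<Sum>k=1..n+1. 1 * (X x k - X x i)) \<le> 1" "(\<Sum>k=1..n+1. 1 * (X y k - X y i)) \<le> 1"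
      using x y i by (auto simp: Q_def)
    have "u * (\<Sum>k=1..n+1. 1 * (X x k - X x i)) + v * (\<Sum>k=1..n+1. 1 * (X y k - X y i)) \<le> u * 1 + v * 1"
      using uv b by (intro add_mono mult_left_mono) auto
    then show ?thesis using s2[of i] uv by simp
  qed
  show "u *\<^sub>R x + v *\<^sub>R y \<in> Q" using c1 c2 by (simp add: Q_def)
qed

lemma sumX_vcol: "k \<in> {1..n+1} \<Longrightarrow> (\<Sum>m=1..n. X (vcol ix n k) m) = (if k \<le> n then 1 else - real n)"
proof -
  assume k: "k \<in> {1..n+1}"
  have "(\<Sum>m=1..n. X (vcol ix n k) m) = (\<Sum>m=1..n. (if k \<le> n then (if m = k then 1 else 0) else -1))"
    by (rule sum.cong) (auto simp: X_vcol[OF k])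
  also have "\<dots> = (if k \<le> n then 1 else - real n)" using k by auto
  finally show ?thesis .
qed

lemma vcol_Q: "k \<in> {1..n+1} \<Longrightarrow> vcol ix n k \<in> Q"
proof -
  assume k: "k \<in> {1..n+1}"
  let ?v = "vcol ix n k"
  have c1: "(\<Sum>m=1..n. 1 * X ?v m) \<le> 1" using sumX_vcol[OF k] by auto
  have c2: "(\<Sum>m=1..n+1. 1 * (X ?v m - X ?v i)) \<le> 1" if i: "i \<in> {1..n}" for i
  proof -
    have "(\<Sum>m=1..n+1. 1 * (X ?v m - X ?v i)) = (\<Sum>m=1..n. X ?v m) - real (n+1) * X ?v i"
      by (simp add: sum_subtractf)
    also have "\<dots> \<le> 1"
      using sumX_vcol[OF k] X_vcol[OF k i] k i by (auto simp: algebra_simps)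
    finally show ?thesis .
  qed
  show ?thesis using c1 c2 by (simp add: Q_def)
qed

lemma nabla_latt: "nabla ix n \<inter> latt = Vs"
proof
  have "nabla ix n \<subseteq> Q" unfolding nabla_def
    by (rule hull_minimal) (use vcol_Q Q_convex in auto)
  show "nabla ix n \<inter> latt \<subseteq> Vs"
  proof
    fix x assume x: "x \<in> nabla ix n \<inter> latt"
    then have xQ: "x \<in> Q" using \<open>nabla ix n \<subseteq> Q\<close> by blast
    show "x \<in> Vs"
      by (rule small_latt[of x "\<lambda>_. 1" 1]) (use x xQ in \<open>auto simp: Q_def\<close>)
  qed
next
  have z: "0 \<in> nabla ix n"
  proof -
    have "(\<Sum>k\<in>{1..n+1}. (1 / real (n+1)) *\<^sub>R vcol ix n k) \<in> convex hull (vcol ix n ` {1..n+1})"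
      by (rule convex_sum) (auto simp: hull_inc)
    moreover have "(\<Sum>k\<in>{1..n+1}. (1 / real (n+1)) *\<^sub>R vcol ix n k) = 0"
    proof (rule vec_from_X, intro ballI)
      fix m assume m: "m \<in> {1..n}"
      have "X (\<Sum>k\<in>{1..n+1}. (1 / real (n+1)) *\<^sub>R vcol ix n k) m = (\<Sum>k\<in>{1..n+1}. (1 / real (n+1)) * X (vcol ix n k) m)"
        using m by (simp add: X_def sum_component)
      also have "\<dots> = (\<Sum>k\<in>{1..n+1}. (1 / real (n+1)) * (if k \<le> n then (if m = k then 1 else 0) else -1))"
        by (rule sum.cong) (use X_vcol m in auto)
      also have "\<dots> = (1 / real (n+1)) * (\<Sum>k\<in>{1..n+1}. (if k \<le> n then (if m = k then 1 else 0) else -1))"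
        by (simp only: sum_distrib_left)
      also have "(\<Sum>k\<in>{1..n+1}. (if k \<le> n then (if m = k then 1 else 0) else -1)) = (0::real)"
      proof -
        have "(\<Sum>k\<in>{1..n}. (if k \<le> n then (if m = k then 1 else 0) else -1)) = (\<Sum>k\<in>{1..n}. (if m = k then 1 else (0::real)))"
          by (rule sum.cong) auto
        also have "\<dots> = 1" using m by (simp add: sum.delta)
        finally have e: "(\<Sum>k\<in>{1..n}. (if k \<le> n then (if m = k then 1 else 0) else -1)) = (1::real)" .
        have "(\<Sum>k\<in>{1..n+1}. (if k \<le> n then (if m = k then 1 else 0) else -1)) =
              (\<Sum>k\<in>{1..n}. (if k \<le> n then (if m = k then 1 else 0) else -1)) + (-1::real)"
          by (simp add: sum.cl_ivl_Suc)
        then show ?thesis using e by simp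
      qed
      finally show "X (\<Sum>k\<in>{1..n+1}. (1 / real (n+1)) *\<^sub>R vcol ix n k) m = X 0 m" by (simp add: X_def)
    qed
    ultimately show ?thesis by (simp add: nabla_def)
  qed
  show "Vs \<subseteq> nabla ix n \<inter> latt"
    using Vs_latt z by (auto simp: Vs_def nabla_def hull_inc)
qed

lemma card_Vs: "card Vs = n + 2"
proof -
  have inj: "inj_on (vcol ix n) {1..n+1}"
  proof
    fix k l assume k: "k \<in> {1..n+1}" and l: "l \<in> {1..n+1}" and e: "vcol ix n k = vcol ix n l"
    show "k = l"
    proof (cases "k \<le> n")
      case True
      have "X (vcol ix n k) k = 1" using X_vcol[OF k, of k] True k by auto
      then have "X (vcol ix n l) k = 1" using e by simp
      then show ?thesis using X_vcol[OF l, of k] True k by (auto split: if_splits)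
    next
      case False
      then have kk: "k = n+1" using k by auto
      show ?thesis
      proof (cases "l \<le> n")
        case True
        have "X (vcol ix n l) l = 1" using X_vcol[OF l, of l] True l by auto
        then have "X (vcol ix n k) l = 1" using e by simp
        then show ?thesis using X_vcol[OF k, of l] True l kk by auto
      next
        case False then show ?thesis using kk l by auto
      qed
    qed
  qed
  have nz: "0 \<notin> vcol ix n ` {1..n+1}"
  proof
    assume "0 \<in> vcol ix n ` {1..n+1}"
    then obtain k where k: "k \<in> {1..n+1}" "vcol ix n k = 0" by auto
    define m where "m = (if k \<le> n then k else 1)"
    have m: "m \<in> {1..n}" using k n4 by (auto simp: m_def)
    have "X (vcol ix n k) m \<noteq> 0" using X_vcol[OF k(1) m] by (auto simp: m_def)
    moreover have "X (0::real^'n) m = 0" by (simp add: X_def)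
    ultimately show False using k(2) by simp
  qed
  have "card Vs = Suc (card (vcol ix n ` {1..n+1}))" unfolding Vs_def using nz by simp
  also have "\<dots> = Suc (n+1)" using card_image[OF inj] by simp
  finally show ?thesis by simp
qed

end


context P5 begin

abbreviation "PK \<equiv> Delta_mK ix n a"

lemma PK_INT: "PK = (\<Inter>i\<in>{1..n+1}. {x. Wv i \<bullet> x \<ge> - C i})"
  unfolding Delta_mK_eq by auto

lemma PK_convex: "convex PK"
  unfolding PK_INT by (rule convex_INT) (rule convex_halfspace_ge)

definition "U = (\<Inter>i\<in>{1..n+1}. {x. Wv i \<bullet> x > - C i})"

lemma U_open: "open U"
  unfolding U_def by (intro open_INT) (auto intro: open_halfspace_gt)

lemma U_sub: "U \<subseteq> PK"
  unfolding U_def PK_INT by (auto intro: less_imp_le)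

lemma U_int: "U \<subseteq> interior PK"
  using interior_maximal[OF U_sub U_open] .

lemma zero_U: "0 \<in> U"
proof -
  have "- C i < 0" if "i \<in> {1..n+1}" for i using C_ge1[OF that] by simp
  then show ?thesis unfolding U_def by auto
qed

lemma aff_dim_PK: "aff_dim PK = int n"
proof -
  have "interior PK \<noteq> {}" using zero_U U_int by blast
  then have "aff_dim PK = int DIM(real^'n)" by (rule aff_dim_nonempty_interior)
  then show ?thesis by (simp add: card_n)
qed

lemma tight_other:
  assumes x: "x \<in> latt" "x \<in> PK" and j: "j \<in> {1..n+1}" and tj: "Wv j \<bullet> x = - C j"
  shows "\<exists>i\<in>{1..n+1}. i \<noteq> j \<and> Wv i \<bullet> x = - C i"
proof -
  define y where "y k = X x k - X x j" for k
  define G where "G = Aa x - S * X x j"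
  have yint: "y k \<in> \<int>" for k using X_int[OF x(1)] by (simp add: y_def)
  have yj: "y j = 0" by (simp add: y_def)
  have GC: "G = C j" using tj inner_Wv[OF j] by (simp add: G_def)
  have Gs: "G = (\<Sum>k=1..n+1. al k * y k)" unfolding G_def y_def by (rule sum_diff_form[symmetric])
  have Wy: "Wv i \<bullet> x = S * y i - G" if "i \<in> {1..n+1}" for i
    using inner_Wv[OF that] by (simp add: y_def G_def algebra_simps)
  have cons: "S * y i - C j \<ge> - C i" if i: "i \<in> {1..n+1}" for i
    using x(2) i Wy[OF i] GC unfolding Delta_mK_eq by force
  have ynn: "y i \<ge> 0" if i: "i \<in> {1..n+1}" for i
  proof -
    have "S * y i \<ge> C j - C i" using cons[OF i] by simp
    moreover have "C j - C i > - S" using C_ge1[OF j] C_lt_S[OF i] by simp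
    ultimately have "S * (y i + 1) > 0" by (simp add: algebra_simps)
    then have "y i + 1 > 0" using S_pos zero_less_mult_pos by blast
    then have "y i > -1" by simp
    then show ?thesis using int_lt_le[of "-1" "y i"] yint by auto
  qed
  have tnn: "al k * y k \<ge> 0" if "k \<in> {1..n+1}" for k
    using ynn[OF that] al_pos[OF that] by simp
  obtain k where k: "k \<in> {1..n+1}" "y k \<ge> 1"
  proof (rule ccontr)
    assume "\<not> thesis"
    then have "\<forall>k\<in>{1..n+1}. \<not> y k \<ge> 1" using that by blast
    then have "\<forall>k\<in>{1..n+1}. y k = 0" using ynn int_pos_ge1 yint by (metis less_eq_real_def)
    then have "G = 0" unfolding Gs by simp
    then show False using GC C_ge1[OF j] by simp
  qed
  have kj: "k \<noteq> j" using k yj by auto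
  have Gk: "G \<ge> al k * y k" unfolding Gs by (rule member_le_sum) (use k tnn in auto)
  have Cjk: "C j \<le> al k" using C_le[OF j k(1) kj] .
  have alk: "al k * y k \<ge> al k" using k al_pos[OF k(1)] by simp
  obtain i where i: "i \<in> {1..n+1}" "i \<noteq> j" "i \<noteq> k"
  proof -
    have "card ({1..n+1} - {j,k}) \<ge> card {1..n+1} - card {j,k}" by (rule diff_card_le_card_Diff) auto
    moreover have "card {j,k} \<le> 2" by (simp add: card_insert_le_m1)
    ultimately have "card ({1..n+1} - {j,k}) > 0" using n4 by auto
    then obtain i where "i \<in> {1..n+1} - {j,k}" by (metis card_gt_0_iff ex_in_conv)
    then show ?thesis using that by blast
  qed
  have yi: "y i = 0"
  proof (rule ccontr)
    assume "y i \<noteq> 0"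
    then have "y i \<ge> 1" using ynn[OF i(1)] int_pos_ge1 yint by force
    then have "al i * y i \<ge> al i" using al_pos[OF i(1)] by simp
    have "al k * y k + al i * y i = (\<Sum>m\<in>{k,i}. al m * y m)" using i by simp
    also have "\<dots> \<le> G" unfolding Gs by (rule sum_mono2) (use k i tnn in auto)
    finally have "al k * y k + al i * y i \<le> G" .
    then show False using alk \<open>al i * y i \<ge> al i\<close> al_pos[OF i(1)] Cjk GC by linarith
  qed
  have "C i \<le> al k" using C_le[OF i(1) k(1)] i(3) by auto
  moreover have "C i \<ge> C j" using cons[OF i(1)] yi by simp
  ultimately have "C i = C j" using Gk alk GC Cjk by linarith
  then have "Wv i \<bullet> x = - C i" using Wy[OF i(1)] yi GC by simp
  then show ?thesis using i by blast
qed

lemma Aa_lin: "Aa (u *\<^sub>R x + v *\<^sub>R y) = u * Aa x + v * Aa y"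
  unfolding Aa_def by (simp add: sum.distrib sum_distrib_left algebra_simps)

lemma Aa_axis: "m \<in> {1..n} \<Longrightarrow> Aa (axis (ix m) 1) = al m"
proof -
  assume m: "m \<in> {1..n}"
  have "Aa (axis (ix m) 1) = (\<Sum>k=1..n. if k = m then al m else 0)"
    unfolding Aa_def by (rule sum.cong) (use m X_axis in \<open>auto simp: axis_def\<close>)
  also have "\<dots> = al m" using m by simp
  finally show ?thesis .
qed

lemma dvec:
  assumes p: "p \<in> {1..n+1}" and q: "q \<in> {1..n}" and pq: "p \<noteq> q" and m: "m \<in> {1..n}" "m \<noteq> p" "m \<noteq> q"
  defines "d \<equiv> al q *\<^sub>R axis (ix m) (1::real) + (- al m) *\<^sub>R axis (ix q) 1"
  shows "Wv p \<bullet> d = 0" "Wv q \<bullet> d = - S * al m"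
proof -
  have Ad: "Aa d = 0" unfolding d_def Aa_lin using Aa_axis[OF m(1)] Aa_axis[OF q] by simp
  have Xd: "X d k = al q * (if k = m then 1 else 0) + (- al m) * (if k = q then 1 else 0)" if "k \<in> {1..n}" for k
    unfolding d_def X_lin using X_axis[OF m(1) that] X_axis[OF q that] by simp
  have "X d p = 0"
  proof (cases "p \<le> n")
    case True then show ?thesis using Xd[of p] p m pq by auto
  next
    case False then show ?thesis by (simp add: X_def)
  qed
  then show "Wv p \<bullet> d = 0" using inner_Wv[OF p] Ad by simp
  have "X d q = - al m" using Xd[OF q] m by auto
  moreover have q': "q \<in> {1..n+1}" using q by auto
  ultimately show "Wv q \<bullet> d = - S * al m" using inner_Wv[OF q'] Ad by simp
qed

lemma facet_no_int:
  assumes F: "F facet_of PK"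
  shows "rel_interior F \<inter> latt = {}"
proof (rule ccontr)
  assume "rel_interior F \<inter> latt \<noteq> {}"
  then obtain x where xr: "x \<in> rel_interior F" and xl: "x \<in> latt" by blast
  have Ff: "F face_of PK" and Fd: "aff_dim F = aff_dim PK - 1" using F unfolding facet_of_def by auto
  have xF: "x \<in> F" using xr rel_interior_subset by blast
  have FP: "F \<subseteq> PK" using face_of_imp_subset[OF Ff] .
  have xP: "x \<in> PK" using xF FP by blast
  have FneP: "F \<noteq> PK" using Fd by auto
  obtain j where j: "j \<in> {1..n+1}" "Wv j \<bullet> x = - C j"
  proof (rule ccontr)
    assume "\<not> thesis"
    then have "\<forall>j\<in>{1..n+1}. Wv j \<bullet> x \<noteq> - C j" using that by blast
    moreover have "\<forall>j\<in>{1..n+1}. Wv j \<bullet> x \<ge> - C j" using xP unfolding Delta_mK_eq by blast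
    ultimately have "x \<in> U" unfolding U_def by force
    then have "x \<in> rel_interior PK" using U_int interior_subset_rel_interior by blast
    then show False using face_of_disjoint_rel_interior[OF Ff FneP] xF by blast
  qed
  obtain i where i: "i \<in> {1..n+1}" "i \<noteq> j" "Wv i \<bullet> x = - C i"
    using tight_other[OF xl xP j] by blast
  have inH: "F \<subseteq> {z. Wv r \<bullet> z = - C r}" if r: "r \<in> {1..n+1}" "Wv r \<bullet> x = - C r" for r
  proof -
    have T: "(PK \<inter> {z. Wv r \<bullet> z = - C r}) face_of PK"
      by (rule face_of_Int_supporting_hyperplane_ge[OF PK_convex]) (use r in \<open>auto simp: Delta_mK_eq\<close>)
    have "F \<subseteq> PK \<inter> {z. Wv r \<bullet> z = - C r}"
      by (rule subset_of_face_of[OF T FP]) (use xr xP r in auto)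
    then show ?thesis by blast
  qed
  obtain p q where pq: "p \<in> {1..n+1}" "q \<in> {1..n}" "p \<noteq> q" "Wv p \<bullet> x = - C p" "Wv q \<bullet> x = - C q"
  proof (cases "i \<le> n")
    case True then show ?thesis using that[of j i] i j by auto
  next
    case False
    then have "j \<le> n" using i j by auto
    then show ?thesis using that[of i j] i j by auto
  qed
  have Fp: "F \<subseteq> {z. Wv p \<bullet> z = - C p}" using inH pq by blast
  have Fq: "F \<subseteq> {z. Wv q \<bullet> z = - C q}" using inH pq by auto
  have Wp0: "Wv p \<noteq> 0" using Wv_nz[OF pq(1)] .
  have ahF: "affine hull F = {z. Wv p \<bullet> z = - C p}"
  proof (rule affine_dim_equal)
    show "affine (affine hull F)" by simp
    show "affine {z. Wv p \<bullet> z = - C p}" by (rule affine_hyperplane)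
    show "affine hull F \<noteq> {}" using xF hull_subset by fastforce
    show "affine hull F \<subseteq> {z. Wv p \<bullet> z = - C p}" by (rule hull_minimal[OF Fp]) (rule affine_hyperplane)
    have "aff_dim {z. Wv p \<bullet> z = - C p} = int DIM(real^'n) - 1" using Wp0 by simp
    then show "aff_dim (affine hull F) = aff_dim {z. Wv p \<bullet> z = - C p}"
      using Fd aff_dim_PK by (simp add: card_n)
  qed
  obtain m where m: "m \<in> {1..n}" "m \<noteq> p" "m \<noteq> q"
  proof -
    have "card ({1..n} - {p,q}) \<ge> card {1..n} - card {p,q}" by (rule diff_card_le_card_Diff) auto
    moreover have "card {p,q} \<le> 2" by (simp add: card_insert_le_m1)
    ultimately have "card ({1..n} - {p,q}) > 0" using n4 by auto
    then obtain m where "m \<in> {1..n} - {p,q}" by (metis card_gt_0_iff ex_in_conv)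
    then show ?thesis using that by blast
  qed
  define d where "d = al q *\<^sub>R axis (ix m) (1::real) + (- al m) *\<^sub>R axis (ix q) 1"
  have dp: "Wv p \<bullet> d = 0" and dq: "Wv q \<bullet> d = - S * al m"
    using dvec[OF pq(1) pq(2) pq(3) m] unfolding d_def by auto
  have dqnz: "Wv q \<bullet> d \<noteq> 0" using dq S_pos al_pos[of m] m by auto
  then have dnz: "d \<noteq> 0" by auto
  obtain e where e: "e > 0" "ball x e \<inter> affine hull F \<subseteq> F" using xr mem_rel_interior_ball by blast
  define t where "t = e / (2 * norm d)"
  have tpos: "t > 0" using e dnz by (simp add: t_def)
  define z where "z = x + t *\<^sub>R d"
  have "dist x z = t * norm d" using tpos by (simp add: z_def dist_norm)
  also have "\<dots> = e / 2" using dnz by (simp add: t_def)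
  finally have "z \<in> ball x e" using e by simp
  moreover have "z \<in> affine hull F" unfolding ahF z_def using pq(4) dp by (simp add: inner_add_right)
  ultimately have "z \<in> F" using e by blast
  then have "Wv q \<bullet> z = - C q" using Fq by blast
  moreover have "Wv q \<bullet> z = - C q + t * (Wv q \<bullet> d)" using pq(5) by (simp add: z_def inner_add_right)
  ultimately show False using tpos dqnz by simp
qed

lemma facet_sum_zero: "(\<Sum>\<Theta>\<in>{F. F facet_of PK}. int (ilpts \<Theta>)) = 0"
proof -
  have "ilpts \<Theta> = 0" if "\<Theta> facet_of PK" for \<Theta>
    using facet_no_int[OF that] by (simp add: ilpts_def)
  then show ?thesis by (simp add: sum.neutral)
qed

end


context P5 begin

lemma Pb_Vs_sub: "Vs \<subseteq> Delta_b ix n a \<inter> latt" using Vs_Delta_b Vs_latt by blast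

lemma lpts_nabla: "lpts (nabla ix n) = n + 2"
  unfolding lpts_def nabla_latt card_Vs ..

lemma card_iff: "card (Delta_b ix n a \<inter> latt) = n + 2 \<longleftrightarrow> Delta_b ix n a \<inter> latt = Vs"
proof
  assume c: "card (Delta_b ix n a \<inter> latt) = n + 2"
  have fin: "finite (Delta_b ix n a \<inter> latt)"
  proof (rule ccontr)
    assume "\<not> finite (Delta_b ix n a \<inter> latt)"
    then have "card (Delta_b ix n a \<inter> latt) = 0" by simp
    then show False using c by simp
  qed
  show "Delta_b ix n a \<inter> latt = Vs"
  proof -
    have "card Vs = card (Delta_b ix n a \<inter> latt)" using c card_Vs by simp
    then have "Vs = Delta_b ix n a \<inter> latt" by (rule card_subset_eq[OF fin Pb_Vs_sub])
    then show ?thesis by simp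
  qed
next
  assume "Delta_b ix n a \<inter> latt = Vs" then show "card (Delta_b ix n a \<inter> latt) = n + 2" using card_Vs by simp
qed

lemma hull_iff: "lhull (Delta_b ix n a) = nabla ix n \<longleftrightarrow> Delta_b ix n a \<inter> latt = Vs"
proof
  assume h: "lhull (Delta_b ix n a) = nabla ix n"
  have "Delta_b ix n a \<inter> latt \<subseteq> convex hull (Delta_b ix n a \<inter> latt)" by (rule hull_subset)
  then have "Delta_b ix n a \<inter> latt \<subseteq> nabla ix n" using h unfolding lhull_def by simp
  then have "Delta_b ix n a \<inter> latt \<subseteq> nabla ix n \<inter> latt" by blast
  then have "Delta_b ix n a \<inter> latt \<subseteq> Vs" unfolding nabla_latt .
  then show "Delta_b ix n a \<inter> latt = Vs" using Pb_Vs_sub by blast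
next
  assume h: "Delta_b ix n a \<inter> latt = Vs"
  have "0 \<in> nabla ix n" using nabla_latt by (auto simp: Vs_def)
  then have "convex hull Vs = nabla ix n" unfolding Vs_def nabla_def by (rule hull_redundant)
  then show "lhull (Delta_b ix n a) = nabla ix n" unfolding lhull_def h .
qed

lemma c4_iff: "Delta_b ix n a \<inter> latt = Vs \<longleftrightarrow> \<lfloor>of_int (a n) / of_int (a 1) :: real\<rfloor> = 1"
proof
  assume h: "Delta_b ix n a \<inter> latt = Vs"
  show "\<lfloor>of_int (a n) / of_int (a 1) :: real\<rfloor> = 1"
  proof (rule ccontr)
    assume "\<lfloor>of_int (a n) / of_int (a 1) :: real\<rfloor> \<noteq> 1"
    then have "\<lfloor>al n / al 1\<rfloor> \<noteq> 1" by (simp add: al_def)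
    then show False using cond4_not h by blast
  qed
next
  assume "\<lfloor>of_int (a n) / of_int (a 1) :: real\<rfloor> = 1"
  then have "\<lfloor>al n / al 1\<rfloor> = 1" by (simp add: al_def)
  then show "Delta_b ix n a \<inter> latt = Vs" using cond4_sub Pb_Vs_sub by blast
qed

lemma main:
  "(mYv ix n a = 1 \<longleftrightarrow>
           (lpts (Delta_b ix n a) = lpts (nabla ix n) \<and> lpts (nabla ix n) = n + 2))
       \<and> ((lpts (Delta_b ix n a) = lpts (nabla ix n) \<and> lpts (nabla ix n) = n + 2) \<longleftrightarrow>
           lhull (Delta_b ix n a) = nabla ix n)
       \<and> (lhull (Delta_b ix n a) = nabla ix n \<longleftrightarrow>
           \<lfloor>of_int (a n) / of_int (a 1) :: real\<rfloor> = 1)"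
proof -
  have m: "mYv ix n a = int (card (Delta_b ix n a \<inter> latt)) - 1 - int n"
    unfolding mYv_def lpts_def using facet_sum_zero by simp
  have e1: "mYv ix n a = 1 \<longleftrightarrow> card (Delta_b ix n a \<inter> latt) = n + 2" unfolding m by linarith
  have e2: "(lpts (Delta_b ix n a) = lpts (nabla ix n) \<and> lpts (nabla ix n) = n + 2) \<longleftrightarrow>
            card (Delta_b ix n a \<inter> latt) = n + 2"
    unfolding lpts_nabla by (simp add: lpts_def)
  show ?thesis using e1 e2 card_iff hull_iff c4_iff by blast
qed

end

theorem proposition5p6:
  fixes ix :: "nat \<Rightarrow> 'n::finite" and n :: nat and a :: "nat \<Rightarrow> int"
  assumes n4: "n \<ge> 4"
    and ix: "bij_betw ix {1..n} (UNIV :: 'n set)"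
    and apos: "\<forall>i\<in>{1..n+1}. a i > 0"
    and amono: "\<forall>i\<in>{1..n}. a i \<le> a (i + 1)"
    and agcd: "Gcd (a ` {1..n+1}) = 1"
    and condA: "convex hull (nabla' ix n a \<inter> latt) =
        convex hull (insert 0 {of_int \<lfloor>of_int (a n) / of_int (a (n - i + 1)) :: real\<rfloor> *\<^sub>R ebas ix i
                                | i. i \<in> {1..n}})"
    and condB: "\<exists>i\<in>{1..n+1}. \<exists>j\<in>{1..n+1}. i \<noteq> j \<and> dgcd n a i = 1 \<and> dgcd n a j = 1"
  shows "(mYv ix n a = 1 \<longleftrightarrow>
           (lpts (Delta_b ix n a) = lpts (nabla ix n) \<and> lpts (nabla ix n) = n + 2))
       \<and> ((lpts (Delta_b ix n a) = lpts (nabla ix n) \<and> lpts (nabla ix n) = n + 2) \<longleftrightarrow>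
           lhull (Delta_b ix n a) = nabla ix n)
       \<and> (lhull (Delta_b ix n a) = nabla ix n \<longleftrightarrow>
           \<lfloor>of_int (a n) / of_int (a 1) :: real\<rfloor> = 1)"
proof -
  interpret P5 ix n a using n4 ix apos amono by unfold_locales
  show ?thesis by (rule main)
qed



end
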